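(* Let $\varphi:\mathbb R\to\mathbb C$ satisfy $|\varphi(x)|\le Ce^{-|x|}$ for some $C>0$ and $\int_{\mathbb R}\varphi(x)dx=1$. There exist $\varepsilon>0$ and $K\ge1$ such that for every complex-valued $u\in\mathrm{BMO}(\mathbb R)$ with $\|u\|_*<\varepsilon$ and all $x\in\mathbb R$, $y>0$, $$K^{-1}|(\varphi_y*e^u)(x)|\le|e^{(\varphi_y*u)(x)}|\le K|(\varphi_y*e^u)(x)|.$$
   Context: $u_I=|I|^{-1}\int_Iu$, $\|u\|_*=\sup_I|I|^{-1}\int_I|u-u_I|$ over bounded intervals $I$, $\mathrm{BMO}(\mathbb R)=\{\|u\|_*<\infty\}$. $\varphi_y(x)=y^{-1}\varphi(x/y)$. *)

theory Defs
  imports "HOL-Analysis.Analysis"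
begin

definition interval_avg :: "(real \<Rightarrow> complex) \<Rightarrow> real \<Rightarrow> real \<Rightarrow> complex" where
  "interval_avg u a b = complex_of_real (1 / (b - a)) * (LINT t:{a..b}|lborel. u t)"

definition mean_osc :: "(real \<Rightarrow> complex) \<Rightarrow> real \<Rightarrow> real \<Rightarrow> real" where
  "mean_osc u a b = (1 / (b - a)) * (LINT t:{a..b}|lborel. cmod (u t - interval_avg u a b))"

definition in_BMO :: "(real \<Rightarrow> complex) \<Rightarrow> bool" where
  "in_BMO u \<longleftrightarrow> (\<forall>a b. a < b \<longrightarrow> set_integrable lborel {a..b} u) \<and>
                  bdd_above {mean_osc u a b | a b. a < b}"

definition bmo_norm :: "(real \<Rightarrow> complex) \<Rightarrow> real" where
  "bmo_norm u = Sup {mean_osc u a b | a b. a < b}"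

definition dil :: "(real \<Rightarrow> complex) \<Rightarrow> real \<Rightarrow> real \<Rightarrow> complex" where
  "dil \<phi> y x = complex_of_real (1 / y) * \<phi> (x / y)"

definition conv :: "(real \<Rightarrow> complex) \<Rightarrow> (real \<Rightarrow> complex) \<Rightarrow> real \<Rightarrow> complex" where
  "conv f g x = (LINT t|lborel. f (x - t) * g t)"

end

theory Submission
  imports Defs
begin

definition cell :: "real \<Rightarrow> real \<Rightarrow> nat \<Rightarrow> nat \<Rightarrow> real set" where
  "cell a b n j = {a + real j * ((b-a)/2^n) ..< a + (real j + 1) * ((b-a)/2^n)}"

lemma cell_lebesgue: "cell a b n j \<in> sets lebesgue"
  unfolding cell_def by simp

lemma cell_lmeasurable: "cell a b n j \<in> lmeasurable"
proof -
  have "bounded (cell a b n j)" unfolding cell_def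
    by (rule bounded_subset[of "{a + real j * ((b-a)/2^n) .. a + (real j + 1) * ((b-a)/2^n)}"]) auto
  thus ?thesis using bounded_set_imp_lmeasurable cell_lebesgue by blast
qed

lemma Ico_meas: "(x::real) \<le> y \<Longrightarrow> measure lebesgue {x..<y} = y - x"
  by simp

lemma cell_measure: "a \<le> b \<Longrightarrow> measure lebesgue (cell a b n j) = (b-a)/2^n"
proof -
  assume "a \<le> b"
  define h where "h = (b-a)/2^n"
  have "h \<ge> 0" using \<open>a \<le> b\<close> unfolding h_def by simp
  hence "a + real j * h \<le> a + (real j + 1) * h" by (simp add: algebra_simps)
  hence "measure lebesgue {a + real j * h..<a + (real j + 1) * h} = (a + (real j + 1) * h) - (a + real j * h)"
    by (rule Ico_meas)
  also have "\<dots> = h" by (simp add: algebra_simps)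
  finally show ?thesis unfolding cell_def h_def .
qed

lemma cell_disjoint:
  assumes "a < b" "i \<noteq> j" shows "cell a b n i \<inter> cell a b n j = {}"
proof -
  define h where "h = (b-a)/2^n"
  have h: "h > 0" using assms unfolding h_def by simp
  { fix x assume x: "x \<in> cell a b n i" "x \<in> cell a b n j"
    hence "real i * h < (real j + 1) * h" "real j * h < (real i + 1) * h"
      unfolding cell_def h_def[symmetric] by auto
    hence "real i < real j + 1" "real j < real i + 1" using h
      by (simp_all add: mult_less_cancel_right)
    hence False using assms(2) by linarith }
  thus ?thesis by blast
qed

lemma cell_cover:
  assumes "a < b" "x \<in> {a..<b}" shows "\<exists>j<2^n. x \<in> cell a b n j"
proof -
  define h where "h = (b-a)/2^n"
  have h: "h > 0" using assms unfolding h_def by simp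
  define j where "j = nat \<lfloor>(x-a)/h\<rfloor>"
  have q: "(x-a)/h \<ge> 0" using assms h by auto
  have "real j = of_int \<lfloor>(x-a)/h\<rfloor>" unfolding j_def using q by simp
  hence j1: "real j \<le> (x-a)/h" "(x-a)/h < real j + 1" by linarith+
  have "(x-a)/h < 2^n" using assms h unfolding h_def by (simp add: field_simps)
  hence "real j < 2^n" using j1 by linarith
  hence "j < 2^n"
    by (metis of_nat_less_iff of_nat_numeral of_nat_power)
  moreover have "x \<in> cell a b n j" using j1 h unfolding cell_def h_def[symmetric]
    by (auto simp: field_simps)
  ultimately show ?thesis by blast
qed

lemma cell_sub: "a < b \<Longrightarrow> j < 2^n \<Longrightarrow> cell a b n j \<subseteq> {a..<b}"
proof -
  assume ab: "a<b" and j: "j < 2^n"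
  define h where "h = (b-a)/2^n"
  have h: "h > 0" using ab unfolding h_def by simp
  have "real j + 1 \<le> 2^n" using j
    by (metis Suc_leI of_nat_Suc of_nat_le_iff of_nat_numeral of_nat_power add.commute)
  hence "(real j + 1) * h \<le> 2^n * h" using h by (simp add: mult_right_mono)
  also have "2^n * h = b - a" unfolding h_def by simp
  finally show ?thesis unfolding cell_def h_def[symmetric] using h by auto
qed

lemma density_cell:
  fixes a b \<kappa> :: real
  assumes ab: "a < b" and A: "A \<in> sets lebesgue" "A \<subseteq> {a..<b}"
    and pos: "measure lebesgue A > 0" and k: "0 < \<kappa>" "\<kappa> \<le> 1"
  shows "\<exists>n j. j < (2::nat)^n \<and> measure lebesgue (A \<inter> cell a b n j) > (1-\<kappa>) * ((b-a)/2^n)"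
proof (rule ccontr)
  assume neg: "\<not> ?thesis"
  define \<mu> where "\<mu> = measure lebesgue A"
  define e1 where "e1 = \<kappa> * \<mu> / 4"
  have e1: "e1 > 0" using pos k unfolding e1_def \<mu>_def by simp
  have Alm: "A \<in> lmeasurable"
    by (rule bounded_set_imp_lmeasurable[OF _ A(1)])
       (rule bounded_subset[OF _ A(2)], rule bounded_subset[of "{a..b}"], auto)
  obtain U where U: "open U" "A \<subseteq> U" "U - A \<in> lmeasurable" "emeasure lebesgue (U - A) < ennreal e1"
    using sets_lebesgue_outer_open[OF A(1) e1] by blast
  obtain T where T: "closed T" "T \<subseteq> A" "A - T \<in> lmeasurable" "emeasure lebesgue (A - T) < ennreal e1"
    using sets_lebesgue_inner_closed[OF A(1) e1] by blast
  have Ulm: "U \<in> lmeasurable"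
  proof -
    have "U = A \<union> (U - A)" using U by blast
    thus ?thesis using Alm U(3) by (metis fmeasurable.Un)
  qed
  have "measure lebesgue (U - A) < e1"
    using U(4) U(3) by (simp add: emeasure_eq_measure2 ennreal_less_iff)
  moreover have "U = A \<union> (U - A)" using U(2) by blast
  hence "measure lebesgue U \<le> measure lebesgue A + measure lebesgue (U - A)"
    using measure_Un_le[OF fmeasurableD[OF Alm] fmeasurableD[OF U(3)]] by simp
  ultimately have mU: "measure lebesgue U \<le> \<mu> + e1" unfolding \<mu>_def by linarith
  have cT: "compact T"
  proof -
    have "bounded {a..<b}" by (rule bounded_subset[of "{a..b}"]) auto
    hence "bounded T" using T(2) A(2) by (meson bounded_subset order.trans)
    thus ?thesis using T(1) by (simp add: compact_eq_bounded_closed)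
  qed
  have Tlm: "T \<in> lmeasurable" using lmeasurable_compact[OF cT] .
  have "measure lebesgue (A - T) < e1"
    using T(4) T(3) by (simp add: emeasure_eq_measure2 ennreal_less_iff)
  moreover have "measure lebesgue (A - T) = \<mu> - measure lebesgue T"
    unfolding \<mu>_def by (rule measurable_measure_Diff[OF Alm _ T(2)]) (use Tlm in auto)
  ultimately have mT: "measure lebesgue T \<ge> \<mu> - e1" by simp
  then obtain d where d: "d > 0" "(\<Union>x\<in>T. ball x d) \<subseteq> U"
    using compact_subset_open_imp_ball_epsilon_subset[OF cT U(1)] T(2) U(2) by (metis order.trans)
  obtain n where n: "(b-a)/d < 2^n" using real_arch_pow[of 2] by auto
  define h where "h = (b-a)/2^n"
  have h: "h > 0" "h < d" using ab n d unfolding h_def by (auto simp: field_simps)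
  define S where "S = {j. j < (2::nat)^n \<and> cell a b n j \<inter> T \<noteq> {}}"
  have finS: "finite S" unfolding S_def by simp
  have disj: "disjoint_family_on (cell a b n) S"
    unfolding disjoint_family_on_def using cell_disjoint[OF ab] by blast
  have T_eq: "T = (\<Union>j\<in>S. T \<inter> cell a b n j)"
  proof
    show "T \<subseteq> (\<Union>j\<in>S. T \<inter> cell a b n j)"
    proof
      fix x assume "x \<in> T"
      then obtain j where "j < 2^n" "x \<in> cell a b n j" using cell_cover[OF ab, of x n] T(2) A(2) by blast
      thus "x \<in> (\<Union>j\<in>S. T \<inter> cell a b n j)" using \<open>x \<in> T\<close> unfolding S_def by blast
    qed
  qed blast
  have "measure lebesgue T = (\<Sum>j\<in>S. measure lebesgue (T \<inter> cell a b n j))"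
    apply (subst T_eq)
    apply (rule measure_finite_Union[OF finS])
    using Tlm cell_lebesgue apply blast
    using disj unfolding disjoint_family_on_def apply blast
    using fmeasurable_Int_fmeasurable[OF Tlm cell_lebesgue] by (simp add: emeasure_eq_measure2)
  also have "\<dots> \<le> (\<Sum>j\<in>S. (1-\<kappa>) * h)"
  proof (rule sum_mono)
    fix j assume "j \<in> S"
    have "measure lebesgue (T \<inter> cell a b n j) \<le> measure lebesgue (A \<inter> cell a b n j)"
      by (rule measure_mono_fmeasurable) (use T Alm cell_lebesgue Tlm fmeasurable_Int_fmeasurable[OF Alm cell_lebesgue] in auto)
    also have "\<dots> \<le> (1-\<kappa>) * h" using neg \<open>j \<in> S\<close> unfolding S_def h_def by force
    finally show "measure lebesgue (T \<inter> cell a b n j) \<le> (1-\<kappa>) * h" .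
  qed
  also have "\<dots> = (1-\<kappa>) * (\<Sum>j\<in>S. measure lebesgue (cell a b n j))"
    using cell_measure[of a b n] ab unfolding h_def by simp
  also have "(\<Sum>j\<in>S. measure lebesgue (cell a b n j)) = measure lebesgue (\<Union>j\<in>S. cell a b n j)"
    apply (rule measure_finite_Union[symmetric, OF finS])
    using cell_lebesgue disj apply blast+
    using cell_lmeasurable by (simp add: emeasure_eq_measure2)
  also have "\<dots> \<le> measure lebesgue U"
  proof (rule measure_mono_fmeasurable[OF _ _ Ulm])
    show "(\<Union>j\<in>S. cell a b n j) \<subseteq> U"
    proof safe
      fix j z assume j: "j \<in> S" and z: "z \<in> cell a b n j"
      obtain x where x: "x \<in> cell a b n j" "x \<in> T" using j unfolding S_def by blast
      have "dist x z < h" using x(1) z unfolding cell_def h_def[symmetric] dist_real_def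
        by (auto simp: algebra_simps)
      hence "z \<in> ball x d" using h by auto
      thus "z \<in> U" using d x by blast
    qed
    show "(\<Union>j\<in>S. cell a b n j) \<in> sets lebesgue" using cell_lebesgue finS by blast
  qed
  finally have "measure lebesgue T \<le> (1-\<kappa>) * measure lebesgue U"
    using k by (simp add: mult_left_mono)
  also have "\<dots> \<le> (1-\<kappa>) * (\<mu> + e1)" using mU k by (simp add: mult_left_mono)
  finally have "\<mu> - e1 \<le> (1-\<kappa>) * (\<mu> + e1)" using mT by linarith
  moreover have "(1-\<kappa>) * (\<mu> + e1) \<le> \<mu> + e1 - \<kappa> * \<mu>"
    using k e1 by (simp add: algebra_simps)
  ultimately have "\<kappa> * \<mu> \<le> 2 * e1" by linarith
  moreover have "\<kappa> * \<mu> > 0" using k pos unfolding \<mu>_def by simp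
  ultimately show False unfolding e1_def by linarith
qed

lemma set_integrable_bdd:
  fixes g :: "real \<Rightarrow> 'b::{banach, second_countable_topology}"
  assumes "A \<in> sets lborel" "A \<subseteq> {p..q}" "g \<in> borel_measurable lborel" "\<And>t. norm (g t) \<le> B"
  shows "set_integrable lborel A g"
proof -
  have "emeasure lborel A \<le> emeasure lborel {p..q}" by (rule emeasure_mono) (use assms in auto)
  also have "\<dots> < \<infinity>" by (cases "p \<le> q") auto
  finally show ?thesis unfolding set_integrable_def
    by (intro integrableI_bounded_set_indicator[where B=B]) (use assms in auto)
qed

locale bmo_small =
  fixes u :: "real \<Rightarrow> complex" and \<epsilon> :: real
  assumes loc: "\<And>p q. p < q \<Longrightarrow> set_integrable lborel {p..q} u"
    and osc: "\<And>p q. p < q \<Longrightarrow> mean_osc u p q \<le> \<epsilon>"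
    and eps_pos: "0 < \<epsilon>" and eps_small: "\<epsilon> \<le> 1/16"
begin

definition f :: "complex \<Rightarrow> real \<Rightarrow> real" where "f c t = cmod (u t - c)"

lemma u_meas[measurable]: "u \<in> borel_measurable lborel"
proof -
  have m: "(\<lambda>x. indicator {-real n - 1..real n + 1} x *\<^sub>R u x) \<in> borel_measurable lborel" for n :: nat
    using loc[of "-real n - 1" "real n + 1"] unfolding set_integrable_def
    by (auto intro: borel_measurable_integrable)
  show ?thesis
  proof (rule borel_measurable_LIMSEQ_metric[OF m])
    fix x :: real
    obtain N :: nat where N: "\<bar>x\<bar> \<le> real N" using real_arch_simple by blast
    have "eventually (\<lambda>n. indicator {-real n - 1..real n + 1} x *\<^sub>R u x = u x) sequentially"
      unfolding eventually_sequentially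
      by (rule exI[of _ N]) (use N in \<open>auto simp: indicator_def\<close>)
    thus "(\<lambda>n. indicator {-real n - 1..real n + 1} x *\<^sub>R u x) \<longlonglongrightarrow> u x"
      by (rule tendsto_eventually)
  qed
qed

lemma f_meas[measurable]: "f c \<in> borel_measurable lborel"
  unfolding f_def by measurable

lemma f_nonneg: "0 \<le> f c t" unfolding f_def by simp

lemma f_tri: "f c t \<le> f c' t + cmod (c' - c)"
  unfolding f_def using norm_triangle_ineq[of "u t - c'" "c' - c"] by simp

lemma const_int: "(p::real) \<le> q \<Longrightarrow> set_integrable lborel {p..q} (\<lambda>_. c::complex)"
  by (rule set_integrable_bdd[where B="cmod c"]) auto

lemma f_int: "p < q \<Longrightarrow> set_integrable lborel {p..q} (f c)"
proof -
  assume pq: "p < q"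
  have "set_integrable lborel {p..q} (\<lambda>t. u t - c)"
    using set_integral_diff(1)[OF loc[OF pq] const_int] pq by simp
  thus ?thesis unfolding f_def by (rule set_integrable_norm)
qed

lemma f_int_sub: "p < q \<Longrightarrow> A \<in> sets lborel \<Longrightarrow> A \<subseteq> {p..q} \<Longrightarrow> set_integrable lborel A (f c)"
  by (rule set_integrable_subset[OF f_int])

lemma avg_close:
  assumes pq: "p < q"
  shows "cmod (interval_avg u p q - c) \<le> (LINT t:{p..q}|lborel. f c t) / (q - p)"
proof -
  have ci: "set_integrable lborel {p..q} (\<lambda>_. c)" using const_int pq by simp
  have "(LINT t:{p..q}|lborel. u t - c) = (LINT t:{p..q}|lborel. u t) - (LINT t:{p..q}|lborel. c)"
    by (rule set_integral_diff(2)[OF loc[OF pq] ci])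
  also have "(LINT t:{p..q}|lborel. c) = (q - p) *\<^sub>R c"
    using pq by (subst set_integral_const) auto
  finally have eq: "(LINT t:{p..q}|lborel. u t) = (LINT t:{p..q}|lborel. u t - c) + (q - p) *\<^sub>R c"
    by simp
  have "interval_avg u p q - c = complex_of_real (1/(q-p)) * (LINT t:{p..q}|lborel. u t - c)"
    unfolding interval_avg_def eq using pq
    by (simp add: scaleR_conv_of_real field_simps)
  moreover have "cmod (complex_of_real (1/(q-p)) * (LINT t:{p..q}|lborel. u t - c)) = (1/(q-p)) * cmod (LINT t:{p..q}|lborel. u t - c)"
    using pq by (simp only: norm_mult norm_of_real) simp
  ultimately have "cmod (interval_avg u p q - c) = (1/(q-p)) * cmod (LINT t:{p..q}|lborel. u t - c)"
    by simp
  also have "\<dots> \<le> (1/(q-p)) * (LINT t:{p..q}|lborel. f c t)"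
    unfolding f_def using pq
    by (intro mult_left_mono set_integral_norm_bound set_integral_diff(1)[OF loc[OF pq] ci]) auto
  finally show ?thesis by simp
qed

lemma mean_osc_eq: "mean_osc u p q = (LINT t:{p..q}|lborel. f (interval_avg u p q) t) / (q - p)"
  unfolding mean_osc_def f_def by simp

definition Phi :: "nat \<Rightarrow> real \<Rightarrow> real" where "Phi N r = exp (min r (real N)) - 1"

lemma Phi_nonneg: "0 \<le> r \<Longrightarrow> 0 \<le> Phi N r" unfolding Phi_def by simp
lemma Phi_le: "Phi N r \<le> exp (real N)"
proof -
  have "exp (min r (real N)) \<le> exp (real N)" by simp
  thus ?thesis unfolding Phi_def by linarith
qed
lemma Phi_abs: "\<bar>Phi N r\<bar> \<le> exp (real N)"
proof -
  have "exp (min r (real N)) > 0" by simp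
  moreover have "exp (real N) \<ge> 1" by simp
  ultimately show ?thesis using Phi_le[of N r] unfolding Phi_def by linarith
qed
lemma Phi_mono: "r \<le> r' \<Longrightarrow> Phi N r \<le> Phi N r'" unfolding Phi_def by simp
lemma Phi_le_exp: "Phi N r \<le> exp r - 1" unfolding Phi_def by simp
lemma Phi_shift: "0 \<le> d \<Longrightarrow> Phi N (r + d) \<le> exp d * Phi N r + exp d - 1"
proof -
  assume d: "0 \<le> d"
  have "min (r + d) (real N) \<le> min r (real N) + d" using d by linarith
  hence "exp (min (r + d) (real N)) \<le> exp d * exp (min r (real N))"
    by (simp add: exp_add[symmetric] add.commute)
  thus ?thesis unfolding Phi_def by (simp add: algebra_simps)
qed

lemma Phi_f_meas[measurable]: "(\<lambda>t. Phi N (f c t)) \<in> borel_measurable lborel"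
  unfolding Phi_def by measurable

lemma Phi_int: "A \<in> sets lborel \<Longrightarrow> A \<subseteq> {p..q} \<Longrightarrow> set_integrable lborel A (\<lambda>t. Phi N (f c t))"
  by (rule set_integrable_bdd[where B="exp (real N)"]) (auto simp: Phi_abs)

definition MM :: "nat \<Rightarrow> real" where
  "MM N = Sup {(LINT t:{p..q}|lborel. Phi N (f (interval_avg u p q) t)) / (q - p) | p q. p < q}"

lemma avgPhi_le: "p < q \<Longrightarrow> (LINT t:{p..q}|lborel. Phi N (f c t)) / (q - p) \<le> exp (real N)"
proof -
  assume pq: "p < q"
  have "(LINT t:{p..q}|lborel. Phi N (f c t)) \<le> (LINT t:{p..q}|lborel. exp (real N))"
    by (rule set_integral_mono[OF Phi_int]) (use pq in \<open>auto simp: Phi_le intro: set_integrable_bdd[where B="exp (real N)"]\<close>)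
  also have "\<dots> = (q - p) * exp (real N)" using pq by (subst set_integral_const) auto
  finally show ?thesis using pq by (simp add: field_simps)
qed

lemma MM_upper: "p < q \<Longrightarrow> (LINT t:{p..q}|lborel. Phi N (f (interval_avg u p q) t)) / (q - p) \<le> MM N"
  unfolding MM_def
  by (rule cSup_upper) (auto intro!: bdd_aboveI[where M="exp (real N)"] avgPhi_le)

lemma avgPhi_nonneg: "p < q \<Longrightarrow> 0 \<le> (LINT t:{p..q}|lborel. Phi N (f c t)) / (q - p)"
  unfolding set_lebesgue_integral_def
  by (intro divide_nonneg_nonneg integral_nonneg) (auto simp: indicator_def Phi_nonneg f_nonneg)

lemma MM_nonneg: "0 \<le> MM N"
  using avgPhi_nonneg[of 0 1] MM_upper[of 0 1] by (meson order.trans zero_less_one)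

end

lemma set_int_mono_set:
  fixes g :: "real \<Rightarrow> real"
  assumes "A \<subseteq> B" "A \<in> sets lborel" "B \<in> sets lborel" "set_integrable lborel B g" "\<And>t. 0 \<le> g t"
  shows "(LINT t:A|lborel. g t) \<le> (LINT t:B|lborel. g t)"
proof -
  have "set_integrable lborel A g" by (rule set_integrable_subset[OF assms(4) assms(2) assms(1)])
  thus ?thesis using assms unfolding set_lebesgue_integral_def set_integrable_def
    by (intro integral_mono) (auto simp: indicator_def)
qed

lemma Icc_Ico_int:
  fixes g :: "real \<Rightarrow> 'b::{banach, second_countable_topology}"
  assumes "g \<in> borel_measurable lborel"
  shows "(LINT t:{p..<q}|lborel. g t) = (LINT t:{p..q}|lborel. g t)"
proof (rule set_integral_cong_set)
  show "set_borel_measurable lborel {p..<q} g" "set_borel_measurable lborel {p..q} g"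
    unfolding set_borel_measurable_def using assms by measurable
  show "AE x in lborel. (x \<in> {p..q}) = (x \<in> {p..<q})"
    using AE_lborel_singleton[of q] by eventually_elim auto
qed

context bmo_small begin

definition bad :: "complex \<Rightarrow> real \<Rightarrow> real \<Rightarrow> bool" where
  "bad c p q \<longleftrightarrow> 2 * \<epsilon> * (q - p) < (LINT t:{p..q}|lborel. f c t)"

fun Bset :: "complex \<Rightarrow> nat \<Rightarrow> real \<Rightarrow> real \<Rightarrow> real set" where
  "Bset c 0 p q = (if bad c p q then {p..<q} else {})"
| "Bset c (Suc n) p q = (if bad c p q then {p..<q} else Bset c n p ((p+q)/2) \<union> Bset c n ((p+q)/2) q)"

lemma Bset_sub: "p \<le> q \<Longrightarrow> Bset c n p q \<subseteq> {p..<q}"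
proof (induction n arbitrary: p q)
  case 0 thus ?case by simp
next
  case (Suc n)
  have "Bset c n p ((p+q)/2) \<subseteq> {p..<(p+q)/2}" "Bset c n ((p+q)/2) q \<subseteq> {(p+q)/2..<q}"
    using Suc.IH Suc.prems by auto
  thus ?case using Suc.prems by auto
qed

lemma Bset_sets[measurable]: "Bset c n p q \<in> sets lborel"
  by (induction n arbitrary: p q) auto

lemma Bset_mono: "Bset c n p q \<subseteq> Bset c (Suc n) p q"
proof (induction n arbitrary: p q)
  case 0 thus ?case by auto
next
  case (Suc n)
  show ?case using Suc.IH[of p "(p+q)/2"] Suc.IH[of "(p+q)/2" q]
    by (simp only: Bset.simps) auto
qed

lemma Bset_fin: "p \<le> q \<Longrightarrow> emeasure lborel (Bset c n p q) \<noteq> \<infinity>"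
proof -
  assume pq: "p \<le> q"
  have "emeasure lborel (Bset c n p q) \<le> emeasure lborel {p..<q}"
    by (rule emeasure_mono[OF Bset_sub[OF pq]]) simp
  thus ?thesis using pq by (auto simp: top_unique)
qed

definition Y :: "nat \<Rightarrow> real" where "Y N = exp (4*\<epsilon>) * MM N + exp (4*\<epsilon>) - 1"

lemma bad_case_Phi:
  assumes pq: "p < q" and pre: "(LINT t:{p..q}|lborel. f c t) \<le> 4 * \<epsilon> * (q - p)"
  shows "(LINT t:{p..q}|lborel. Phi N (f c t)) \<le> Y N * (q - p)"
proof -
  define c' where "c' = interval_avg u p q"
  define d where "d = cmod (c' - c)"
  have "d \<le> (LINT t:{p..q}|lborel. f c t) / (q - p)"
    unfolding d_def c'_def by (rule avg_close[OF pq])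
  also have "\<dots> \<le> 4 * \<epsilon>" using pre pq by (simp add: field_simps)
  finally have d4: "d \<le> 4 * \<epsilon>" .
  have d0: "0 \<le> d" unfolding d_def by simp
  have pw: "Phi N (f c t) \<le> exp (4*\<epsilon>) * Phi N (f c' t) + (exp (4*\<epsilon>) - 1)" for t
  proof -
    have "Phi N (f c t) \<le> Phi N (f c' t + d)"
      by (rule Phi_mono) (use f_tri[of c t c'] in \<open>simp add: d_def\<close>)
    also have "\<dots> \<le> exp d * Phi N (f c' t) + exp d - 1" by (rule Phi_shift[OF d0])
    also have "\<dots> \<le> exp (4*\<epsilon>) * Phi N (f c' t) + (exp (4*\<epsilon>) - 1)"
    proof -
      have "exp d \<le> exp (4*\<epsilon>)" using d4 by simp
      moreover have "0 \<le> Phi N (f c' t)" by (rule Phi_nonneg[OF f_nonneg])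
      ultimately show ?thesis by (smt (verit) mult_right_mono)
    qed
    finally show ?thesis .
  qed
  have i1: "set_integrable lborel {p..q} (\<lambda>t. Phi N (f c t))" by (rule Phi_int) auto
  have i2: "set_integrable lborel {p..q} (\<lambda>t. Phi N (f c' t))" by (rule Phi_int) auto
  have i3: "set_integrable lborel {p..q} (\<lambda>t. exp (4*\<epsilon>) - 1 :: real)"
    by (rule set_integrable_bdd[where B="\<bar>exp (4*\<epsilon>) - 1\<bar>"]) auto
  have "(LINT t:{p..q}|lborel. Phi N (f c t)) \<le>
        (LINT t:{p..q}|lborel. exp (4*\<epsilon>) * Phi N (f c' t) + (exp (4*\<epsilon>) - 1))"
    by (rule set_integral_mono[OF i1]) (use i2 i3 pw in auto)
  also have "\<dots> = exp (4*\<epsilon>) * (LINT t:{p..q}|lborel. Phi N (f c' t)) + (exp (4*\<epsilon>) - 1) * (q - p)"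
    using i2 i3 pq by (subst set_integral_add(2)) (auto simp: set_integral_const)
  also have "(LINT t:{p..q}|lborel. Phi N (f c' t)) \<le> MM N * (q - p)"
    using MM_upper[OF pq, of N] pq unfolding c'_def by (simp add: field_simps)
  hence "exp (4*\<epsilon>) * (LINT t:{p..q}|lborel. Phi N (f c' t)) \<le> exp (4*\<epsilon>) * (MM N * (q - p))"
    by simp
  finally show ?thesis unfolding Y_def by (simp add: algebra_simps)
qed

lemma bad_case:
  assumes pq: "p < q" and pre: "(LINT t:{p..q}|lborel. f c t) \<le> 4 * \<epsilon> * (q - p)" and b: "bad c p q"
  shows "2 * \<epsilon> * measure lborel {p..<q} \<le> (LINT t:{p..<q}|lborel. f c t) \<and>
         (LINT t:{p..<q}|lborel. Phi N (f c t)) \<le> Y N * measure lborel {p..<q}"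
proof -
  have m: "measure lborel {p..<q} = q - p" using pq by simp
  show ?thesis unfolding m Icc_Ico_int[OF f_meas] Icc_Ico_int[OF Phi_f_meas]
    using b bad_case_Phi[OF pq pre] unfolding bad_def by auto
qed

lemma B_main:
  assumes "p < q" "(LINT t:{p..q}|lborel. f c t) \<le> 4 * \<epsilon> * (q - p)"
  shows "2 * \<epsilon> * measure lborel (Bset c n p q) \<le> (LINT t:Bset c n p q|lborel. f c t) \<and>
         (LINT t:Bset c n p q|lborel. Phi N (f c t)) \<le> Y N * measure lborel (Bset c n p q)"
  using assms
proof (induction n arbitrary: p q)
  case 0
  show ?case
  proof (cases "bad c p q")
    case True thus ?thesis using bad_case[OF 0(1) 0(2) True] by simp
  next
    case False thus ?thesis by (simp add: set_lebesgue_integral_def)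
  qed
next
  case (Suc n)
  note pq = Suc.prems(1)
  show ?case
  proof (cases "bad c p q")
    case True thus ?thesis using bad_case[OF pq Suc.prems(2) True] by simp
  next
    case False
    define m where "m = (p+q)/2"
    have pm: "p < m" "m < q" using pq unfolding m_def by auto
    have tot: "(LINT t:{p..q}|lborel. f c t) \<le> 2 * \<epsilon> * (q - p)" using False unfolding bad_def by simp
    have "(LINT t:{p..m}|lborel. f c t) \<le> (LINT t:{p..q}|lborel. f c t)"
      by (rule set_int_mono_set) (use pm f_int[OF pq] f_nonneg in auto)
    hence pre1: "(LINT t:{p..m}|lborel. f c t) \<le> 4 * \<epsilon> * (m - p)" using tot unfolding m_def by simp
    have "(LINT t:{m..q}|lborel. f c t) \<le> (LINT t:{p..q}|lborel. f c t)"
      by (rule set_int_mono_set) (use pm f_int[OF pq] f_nonneg in auto)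
    moreover have "4 * \<epsilon> * (q - m) = 2 * \<epsilon> * (q - p)" unfolding m_def by (simp add: field_simps)
    ultimately have pre2: "(LINT t:{m..q}|lborel. f c t) \<le> 4 * \<epsilon> * (q - m)" using tot by linarith
    define B1 where "B1 = Bset c n p m"
    define B2 where "B2 = Bset c n m q"
    have IH1: "2 * \<epsilon> * measure lborel B1 \<le> (LINT t:B1|lborel. f c t) \<and>
         (LINT t:B1|lborel. Phi N (f c t)) \<le> Y N * measure lborel B1"
      unfolding B1_def by (rule Suc.IH[OF pm(1) pre1])
    have IH2: "2 * \<epsilon> * measure lborel B2 \<le> (LINT t:B2|lborel. f c t) \<and>
         (LINT t:B2|lborel. Phi N (f c t)) \<le> Y N * measure lborel B2"
      unfolding B2_def by (rule Suc.IH[OF pm(2) pre2])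
    have s1: "B1 \<subseteq> {p..<m}" unfolding B1_def using pm by (intro Bset_sub) simp
    have s2: "B2 \<subseteq> {m..<q}" unfolding B2_def using pm by (intro Bset_sub) simp
    have disj: "B1 \<inter> B2 = {}"
    proof (rule equals0I)
      fix x assume "x \<in> B1 \<inter> B2"
      hence "x < m" "m \<le> x" using s1 s2 by auto
      thus False by simp
    qed
    have eq: "Bset c (Suc n) p q = B1 \<union> B2" using False unfolding B1_def B2_def m_def by simp
    have meas: "measure lborel (B1 \<union> B2) = measure lborel B1 + measure lborel B2"
      by (rule measure_Union) (use Bset_fin pm disj Bset_sets in \<open>auto simp: B1_def B2_def\<close>)
    have sub1: "B1 \<subseteq> {p..q}" "B2 \<subseteq> {p..q}" using s1 s2 pm by auto
    have fi1: "set_integrable lborel B1 (f c)" "set_integrable lborel B2 (f c)"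
      using f_int_sub[OF pq Bset_sets] sub1 unfolding B1_def B2_def by auto
    have gi1: "set_integrable lborel B1 (\<lambda>t. Phi N (f c t))" "set_integrable lborel B2 (\<lambda>t. Phi N (f c t))"
      using Phi_int[OF Bset_sets] sub1 unfolding B1_def B2_def by auto
    have I1: "(LINT t:B1 \<union> B2|lborel. f c t) = (LINT t:B1|lborel. f c t) + (LINT t:B2|lborel. f c t)"
      by (rule set_integral_Un[OF disj fi1])
    have I2: "(LINT t:B1 \<union> B2|lborel. Phi N (f c t)) = (LINT t:B1|lborel. Phi N (f c t)) + (LINT t:B2|lborel. Phi N (f c t))"
      by (rule set_integral_Un[OF disj gi1])
    show ?thesis unfolding eq meas I1 I2 using IH1 IH2 by (simp add: algebra_simps)
  qed
qed

definition lo :: "real \<Rightarrow> real \<Rightarrow> nat \<Rightarrow> nat \<Rightarrow> real" where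
  "lo p q n j = p + real j * ((q-p)/2^n)"

lemma cell_lo: "cell p q n j = {lo p q n j ..< lo p q n (Suc j)}"
  unfolding cell_def lo_def by (simp add: algebra_simps)

lemma lo_left: "lo p q (Suc n) j = lo p ((p+q)/2) n j"
  unfolding lo_def by (simp add: field_simps)

lemma lo_right: "j \<ge> 2^n \<Longrightarrow> lo p q (Suc n) j = lo ((p+q)/2) q n (j - 2^n)"
proof -
  assume j: "j \<ge> 2^n"
  have e: "real (j - 2^n) = real j - 2^n" using j by (simp add: of_nat_diff)
  show ?thesis unfolding lo_def e by (simp add: field_simps)
qed

lemma cell_in_Bset:
  assumes "p < q" "j < 2^n" "bad c (lo p q n j) (lo p q n (Suc j))"
  shows "cell p q n j \<subseteq> Bset c n p q"
  using assms
proof (induction n arbitrary: p q j)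
  case 0
  hence j0: "j = 0" by simp
  have "lo p q 0 0 = p" "lo p q 0 (Suc 0) = q" unfolding lo_def by simp_all
  thus ?case using 0 j0 unfolding cell_lo by simp
next
  case (Suc n)
  show ?case
  proof (cases "bad c p q")
    case True
    thus ?thesis using cell_sub[OF Suc.prems(1) Suc.prems(2)] by simp
  next
    case False
    define m where "m = (p+q)/2"
    have pm: "p < m" "m < q" using Suc.prems(1) unfolding m_def by auto
    have eq: "Bset c (Suc n) p q = Bset c n p m \<union> Bset c n m q" using False unfolding m_def by simp
    show ?thesis
    proof (cases "j < 2^n")
      case True
      have "cell p m n j \<subseteq> Bset c n p m"
        using Suc.IH[OF pm(1) True] Suc.prems(3) unfolding lo_left m_def by simp
      moreover have "cell p q (Suc n) j = cell p m n j" unfolding cell_lo lo_left m_def by simp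
      ultimately show ?thesis unfolding eq by blast
    next
      case False
      hence j: "j \<ge> 2^n" by simp
      have j1: "Suc j \<ge> 2^n" using j by simp
      have j2: "j - 2^n < 2^n" using Suc.prems(2) j by simp
      have sj: "Suc (j - 2^n) = Suc j - 2^n" using j by simp
      have "cell m q n (j - 2^n) \<subseteq> Bset c n m q"
        using Suc.IH[OF pm(2) j2] Suc.prems(3) unfolding lo_right[OF j] lo_right[OF j1] m_def sj by simp
      moreover have "cell p q (Suc n) j = cell m q n (j - 2^n)"
        unfolding cell_lo lo_right[OF j] lo_right[OF j1] m_def sj by simp
      ultimately show ?thesis unfolding eq by blast
    qed
  qed
qed

end

context bmo_small begin

lemma Y_nonneg: "0 \<le> Y N"
proof -
  have "1 \<le> exp (4*\<epsilon>)" using eps_pos by simp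
  moreover have "0 \<le> exp (4*\<epsilon>) * MM N" using MM_nonneg by simp
  ultimately show ?thesis unfolding Y_def by linarith
qed

lemma CZ_step:
  assumes ab: "a < b"
  shows "(LINT t:{a..b}|lborel. Phi N (f (interval_avg u a b) t)) \<le> (b - a) * ((exp (3*\<epsilon>) - 1) + Y N / 2)"
proof -
  define c where "c = interval_avg u a b"
  define B where "B n = Bset c n a b" for n
  define Bu where "Bu = (\<Union>n. B n)"
  define g where "g t = Phi N (f c t)" for t
  have g_meas[measurable]: "g \<in> borel_measurable lborel" unfolding g_def by measurable
  have tot: "(LINT t:{a..b}|lborel. f c t) \<le> \<epsilon> * (b - a)"
    using osc[OF ab] mean_osc_eq[of a b] ab unfolding c_def by (simp add: field_simps)
  have "\<epsilon> * (b - a) \<le> 4 * \<epsilon> * (b - a)" using eps_pos ab by simp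
  hence pre: "(LINT t:{a..b}|lborel. f c t) \<le> 4 * \<epsilon> * (b - a)" using tot by linarith
  have Bsub: "B n \<subseteq> {a..<b}" for n unfolding B_def using Bset_sub ab by simp
  have Bsets[measurable]: "B n \<in> sets lborel" for n unfolding B_def by (rule Bset_sets)
  have Bsets2[simp]: "B n \<in> sets borel" for n using Bsets[of n] by simp
  have Bmain: "2 * \<epsilon> * measure lborel (B n) \<le> (LINT t:B n|lborel. f c t) \<and>
         (LINT t:B n|lborel. g t) \<le> Y N * measure lborel (B n)" for n
    unfolding B_def g_def by (rule B_main[OF ab pre])
  have Bm: "measure lborel (B n) \<le> (b - a) / 2" for n
  proof -
    have "(LINT t:B n|lborel. f c t) \<le> (LINT t:{a..b}|lborel. f c t)"
      by (rule set_int_mono_set) (use Bsub[of n] f_int[OF ab] f_nonneg in auto)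
    hence "2 * \<epsilon> * measure lborel (B n) \<le> \<epsilon> * (b - a)" using Bmain[of n] tot by linarith
    hence "\<epsilon> * (2 * measure lborel (B n)) \<le> \<epsilon> * (b - a)" by (simp add: algebra_simps)
    hence "2 * measure lborel (B n) \<le> b - a" using eps_pos by (simp add: mult_le_cancel_left_pos)
    thus ?thesis by simp
  qed
  have BPhi: "(LINT t:B n|lborel. g t) \<le> Y N * (b - a) / 2" for n
  proof -
    have "Y N * measure lborel (B n) \<le> Y N * ((b - a) / 2)"
      by (rule mult_left_mono[OF Bm Y_nonneg])
    thus ?thesis using Bmain[of n] by simp
  qed
  have inc: "incseq B" by (rule incseq_SucI) (unfold B_def, rule Bset_mono)
  have Bu_sub: "Bu \<subseteq> {a..<b}" unfolding Bu_def using Bsub by blast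
  have Bu_sets[measurable]: "Bu \<in> sets lborel" unfolding Bu_def by measurable
  have Bu_sets2[simp]: "Bu \<in> sets borel" using Bu_sets by simp
  have gint: "set_integrable lborel S g" if "S \<in> sets lborel" "S \<subseteq> {a..b}" for S
    unfolding g_def by (rule Phi_int[OF that])
  have lim: "(\<lambda>n. LINT t:B n|lborel. g t) \<longlonglongrightarrow> (LINT t:(\<Union>n. B n)|lborel. g t)"
    by (rule set_integral_cont_up[OF Bsets inc]) (rule gint, use Bu_sub in \<open>auto simp: Bu_def\<close>)
  have I_Bu: "(LINT t:Bu|lborel. g t) \<le> Y N * (b - a) / 2"
    unfolding Bu_def by (rule LIMSEQ_le_const2[OF lim]) (use BPhi in auto)
  define A where "A = ({a..<b} - Bu) \<inter> {t. 3 * \<epsilon> < f c t}"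
  have A_sets[measurable]: "A \<in> sets lborel" unfolding A_def by measurable
  have A_sets2[simp]: "A \<in> sets borel" using A_sets by simp
  have A_sub: "A \<subseteq> {a..<b}" unfolding A_def by auto
  have A0: "measure lborel A = 0"
  proof (rule ccontr)
    assume "measure lborel A \<noteq> 0"
    hence "measure lborel A > 0" using measure_nonneg[of lborel A] by linarith
    moreover have "measure lebesgue A = measure lborel A" by (rule measure_completion[OF A_sets])
    ultimately have "measure lebesgue A > 0" by simp
    then obtain n j where j: "j < 2^n"
      and big: "measure lebesgue (A \<inter> cell a b n j) > (1 - 1/3) * ((b - a) / 2^n)"
      using density_cell[OF ab _ A_sub, of "1/3"] by auto
    define p' where "p' = lo a b n j"
    define q' where "q' = lo a b n (Suc j)"
    have cl: "cell a b n j = {p'..<q'}" unfolding p'_def q'_def by (rule cell_lo)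
    have h: "q' - p' = (b - a) / 2^n" unfolding p'_def q'_def lo_def by (simp add: field_simps)
    have "(b - a) / 2^n > 0" using ab by simp
    hence pq': "p' < q'" using h by linarith
    define E where "E = A \<inter> cell a b n j"
    have E_sets[measurable]: "E \<in> sets lborel" unfolding E_def cell_def by measurable
    have E_sets2[simp]: "E \<in> sets borel" using E_sets by simp
    have "measure lebesgue E = measure lborel E" by (rule measure_completion[OF E_sets])
    hence mE: "measure lborel E > (2/3) * (q' - p')"
      using big unfolding E_def h by simp
    have Efin: "emeasure lborel E \<noteq> \<infinity>"
    proof -
      have "emeasure lborel E \<le> emeasure lborel {p'..<q'}"
        by (rule emeasure_mono) (use cl in \<open>auto simp: E_def\<close>)
      thus ?thesis using pq' by (auto simp: top_unique)
    qed
    have E_sub: "E \<subseteq> {p'..q'}" unfolding E_def cl by auto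
    have "(LINT t:E|lborel. 3 * \<epsilon>) \<le> (LINT t:E|lborel. f c t)"
    proof (rule set_integral_mono)
      show "set_integrable lborel E (\<lambda>t. 3 * \<epsilon>)"
        by (rule set_integrable_bdd[where B="3*\<epsilon>" and p=p' and q=q']) (use E_sub eps_pos in auto)
      show "set_integrable lborel E (f c)" by (rule f_int_sub[OF pq' E_sets E_sub])
      show "3 * \<epsilon> \<le> f c t" if "t \<in> E" for t using that unfolding E_def A_def by auto
    qed
    also have "\<dots> \<le> (LINT t:{p'..q'}|lborel. f c t)"
      by (rule set_int_mono_set) (use E_sub f_int[OF pq'] f_nonneg in auto)
    finally have "3 * \<epsilon> * measure lborel E \<le> (LINT t:{p'..q'}|lborel. f c t)"
      using Efin by (simp add: set_integral_const algebra_simps)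
    moreover have "2 * \<epsilon> * (q' - p') < 3 * \<epsilon> * measure lborel E"
      using mE eps_pos by simp
    ultimately have "bad c p' q'" unfolding bad_def by linarith
    hence "cell a b n j \<subseteq> B n" unfolding B_def p'_def q'_def by (rule cell_in_Bset[OF ab j])
    hence "E = {}" unfolding E_def A_def Bu_def by blast
    thus False using mE pq' by simp
  qed
  have A_null: "A \<in> null_sets lborel"
  proof -
    have "emeasure lborel A \<le> emeasure lborel {a..<b}" by (rule emeasure_mono[OF A_sub]) simp
    hence "emeasure lborel A \<noteq> \<infinity>" using ab by (auto simp: top_unique)
    hence "emeasure lborel A = ennreal (measure lborel A)" by (simp add: emeasure_eq_ennreal_measure)
    thus ?thesis using A0 by (simp add: null_sets_def)
  qed
  have AE_G: "AE t in lborel. t \<in> {a..b} - Bu \<longrightarrow> g t \<le> exp (3*\<epsilon>) - 1"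
    using AE_not_in[OF A_null] AE_lborel_singleton[of b]
  proof eventually_elim
    case (elim t)
    show ?case
    proof
      assume t: "t \<in> {a..b} - Bu"
      hence "t \<in> {a..<b} - Bu" using elim by auto
      hence "f c t \<le> 3 * \<epsilon>" using elim unfolding A_def by auto
      hence "g t \<le> Phi N (3 * \<epsilon>)" unfolding g_def by (rule Phi_mono)
      also have "\<dots> \<le> exp (3*\<epsilon>) - 1" by (rule Phi_le_exp)
      finally show "g t \<le> exp (3*\<epsilon>) - 1" .
    qed
  qed
  have I_G: "(LINT t:{a..b} - Bu|lborel. g t) \<le> (exp (3*\<epsilon>) - 1) * (b - a)"
  proof -
    have "(LINT t:{a..b} - Bu|lborel. g t) \<le> (LINT t:{a..b} - Bu|lborel. exp (3*\<epsilon>) - 1)"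
    proof (rule set_integral_mono_AE)
      show "set_integrable lborel ({a..b} - Bu) g" by (rule gint) auto
      show "set_integrable lborel ({a..b} - Bu) (\<lambda>t. exp (3*\<epsilon>) - 1)"
        by (rule set_integrable_bdd[where B="\<bar>exp (3*\<epsilon>) - 1\<bar>" and p=a and q=b]) auto
      show "AE t\<in>{a..b} - Bu in lborel. g t \<le> exp (3*\<epsilon>) - 1" using AE_G by simp
    qed
    also have "\<dots> = measure lborel ({a..b} - Bu) * (exp (3*\<epsilon>) - 1)"
    proof -
      have "emeasure lborel ({a..b} - Bu) \<le> emeasure lborel {a..b}" by (rule emeasure_mono) auto
      hence "emeasure lborel ({a..b} - Bu) \<noteq> \<infinity>" using ab by (auto simp: top_unique)
      moreover have "{a..b} - Bu \<in> sets lborel" by measurable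
      ultimately show ?thesis using set_integral_const[of "{a..b} - Bu" lborel "exp (3*\<epsilon>) - 1"] by simp
    qed
    also have "\<dots> \<le> (b - a) * (exp (3*\<epsilon>) - 1)"
    proof (rule mult_right_mono)
      have "measure lborel ({a..b} - Bu) \<le> measure lborel {a..b}"
        by (rule measure_mono_fmeasurable) (use ab in \<open>auto simp: fmeasurable_def\<close>)
      thus "measure lborel ({a..b} - Bu) \<le> b - a" using ab by simp
      show "0 \<le> exp (3*\<epsilon>) - 1" using eps_pos by simp
    qed
    finally show ?thesis by (simp add: mult.commute)
  qed
  have split: "(LINT t:{a..b}|lborel. g t) = (LINT t:Bu|lborel. g t) + (LINT t:{a..b} - Bu|lborel. g t)"
  proof -
    have "{a..b} = Bu \<union> ({a..b} - Bu)" using Bu_sub by auto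
    hence "(LINT t:{a..b}|lborel. g t) = (LINT t:Bu \<union> ({a..b} - Bu)|lborel. g t)" by simp
    also have "\<dots> = (LINT t:Bu|lborel. g t) + (LINT t:{a..b} - Bu|lborel. g t)"
      by (rule set_integral_Un) (auto intro!: gint simp: Bu_sub, use Bu_sub in auto)
    finally show ?thesis .
  qed
  have "(LINT t:{a..b}|lborel. g t) \<le> Y N * (b - a) / 2 + (exp (3*\<epsilon>) - 1) * (b - a)"
    using split I_Bu I_G by linarith
  also have "\<dots> = (b - a) * ((exp (3*\<epsilon>) - 1) + Y N / 2)" by (simp add: algebra_simps)
  finally show ?thesis unfolding g_def c_def .
qed

end

context bmo_small begin

lemma MM_bound: "MM N \<le> 40 * \<epsilon>"
proof -
  define M where "M = MM N"
  have step: "M \<le> (exp (3*\<epsilon>) - 1) + Y N / 2"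
    unfolding M_def MM_def
  proof (rule cSup_least)
    show "{(LINT t:{p..q}|lborel. Phi N (f (interval_avg u p q) t)) / (q - p) | p q. p < q} \<noteq> {}"
    proof -
      have "(0::real) < 1" by simp
      thus ?thesis by blast
    qed
  next
    fix x assume "x \<in> {(LINT t:{p..q}|lborel. Phi N (f (interval_avg u p q) t)) / (q - p) | p q. p < q}"
    then obtain p q where pq: "p < q" and x: "x = (LINT t:{p..q}|lborel. Phi N (f (interval_avg u p q) t)) / (q - p)"
      by blast
    have "(LINT t:{p..q}|lborel. Phi N (f (interval_avg u p q) t)) \<le> (q - p) * ((exp (3*\<epsilon>) - 1) + Y N / 2)"
      by (rule CZ_step[OF pq])
    thus "x \<le> (exp (3*\<epsilon>) - 1) + Y N / 2" unfolding x using pq by (simp add: field_simps)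
  qed
  have e3: "exp (3*\<epsilon>) \<le> 1 + 2 * (3*\<epsilon>)"
    by (rule real_exp_bound_lemma) (use eps_pos eps_small in auto)
  have e4: "exp (4*\<epsilon>) \<le> 1 + 2 * (4*\<epsilon>)"
    by (rule real_exp_bound_lemma) (use eps_pos eps_small in auto)
  have M0: "0 \<le> M" unfolding M_def by (rule MM_nonneg)
  have "exp (4*\<epsilon>) * M \<le> (1 + 8*\<epsilon>) * M" using e4 M0 by (simp add: mult_right_mono)
  moreover have "(1 + 8*\<epsilon>) * M = M + 8 * (\<epsilon> * M)" by (simp add: algebra_simps)
  ultimately have Yb: "Y N \<le> M + 8 * (\<epsilon> * M) + 8 * \<epsilon>" unfolding Y_def M_def[symmetric] using e4 by linarith
  have "M \<le> 6 * \<epsilon> + M / 2 + 4 * (\<epsilon> * M) + 4 * \<epsilon>" using step e3 Yb by linarith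
  moreover have "\<epsilon> * M \<le> (1/16) * M" using eps_small M0 by (rule mult_right_mono)
  ultimately have "M \<le> 40 * \<epsilon>" by linarith
  thus ?thesis unfolding M_def .
qed

lemma JN:
  assumes ab: "a < b"
  shows "set_integrable lborel {a..b} (\<lambda>t. exp (f (interval_avg u a b) t)) \<and>
         (LINT t:{a..b}|lborel. exp (f (interval_avg u a b) t)) \<le> (1 + 40*\<epsilon>) * (b - a)"
proof -
  define c where "c = interval_avg u a b"
  define F where "F N t = indicator {a..b} t * exp (min (f c t) (real N))" for N t
  define G where "G t = indicator {a..b} t * exp (f c t)" for t
  have F_eq: "F N t = indicator {a..b} t *\<^sub>R (Phi N (f c t) + 1)" for N t
    unfolding F_def Phi_def by simp
  have Fint: "integrable lborel (F N)" for N
  proof -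
    have "set_integrable lborel {a..b} (\<lambda>t. Phi N (f c t) + 1)"
      by (rule set_integrable_bdd[where B="exp (real N) + 1" and p=a and q=b]) (auto intro: order.trans[OF abs_triangle_ineq] simp: Phi_abs add_mono)
    thus ?thesis unfolding set_integrable_def F_eq .
  qed
  have Fval: "integral\<^sup>L lborel (F N) = (LINT t:{a..b}|lborel. Phi N (f c t)) + (b - a)" for N
  proof -
    have i1: "set_integrable lborel {a..b} (\<lambda>t. Phi N (f c t))" by (rule Phi_int) auto
    have i2: "set_integrable lborel {a..b} (\<lambda>t. 1::real)" by (rule set_integrable_bdd[where B=1 and p=a and q=b]) auto
    have "integral\<^sup>L lborel (F N) = (LINT t:{a..b}|lborel. Phi N (f c t) + 1)"
      unfolding F_eq set_lebesgue_integral_def ..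
    also have "\<dots> = (LINT t:{a..b}|lborel. Phi N (f c t)) + (LINT t:{a..b}|lborel. 1)"
      by (rule set_integral_add(2)[OF i1 i2])
    also have "(LINT t:{a..b}|lborel. (1::real)) = b - a" using ab by (simp add: set_integral_const)
    finally show ?thesis .
  qed
  have Fbound: "integral\<^sup>L lborel (F N) \<le> (1 + 40*\<epsilon>) * (b - a)" for N
  proof -
    have "(LINT t:{a..b}|lborel. Phi N (f c t)) / (b - a) \<le> MM N" unfolding c_def by (rule MM_upper[OF ab])
    also have "\<dots> \<le> 40 * \<epsilon>" by (rule MM_bound)
    finally have "(LINT t:{a..b}|lborel. Phi N (f c t)) \<le> 40 * \<epsilon> * (b - a)" using ab by (simp add: field_simps)
    thus ?thesis unfolding Fval by (simp add: algebra_simps)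
  qed
  have Finc: "incseq (\<lambda>N. integral\<^sup>L lborel (F N))"
  proof (rule incseq_SucI)
    fix N
    show "integral\<^sup>L lborel (F N) \<le> integral\<^sup>L lborel (F (Suc N))"
      by (rule integral_mono[OF Fint Fint]) (auto simp: F_def indicator_def)
  qed
  obtain L where L: "(\<lambda>N. integral\<^sup>L lborel (F N)) \<longlonglongrightarrow> L"
    using incseq_convergent[OF Finc] Fbound by metis
  have Lb: "L \<le> (1 + 40*\<epsilon>) * (b - a)"
    by (rule LIMSEQ_le_const2[OF L]) (use Fbound in auto)
  have conv: "(\<lambda>N. F N t) \<longlonglongrightarrow> G t" for t
  proof (rule tendsto_eventually)
    obtain N0 :: nat where "f c t \<le> real N0" using real_arch_simple by blast
    thus "eventually (\<lambda>N. F N t = G t) sequentially"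
      unfolding eventually_sequentially F_def G_def
      by (intro exI[of _ N0]) (auto simp: min_def)
  qed
  have G_meas: "G \<in> borel_measurable lborel" unfolding G_def by measurable
  have mono: "AE t in lborel. mono (\<lambda>N. F N t)"
    by (rule AE_I2) (auto simp: mono_def F_def indicator_def)
  have Gi: "integrable lborel G" and Gv: "integral\<^sup>L lborel G = L"
    using integral_monotone_convergence_nonneg[OF Fint mono _ _ L G_meas] conv
    by (auto simp: F_def)
  show ?thesis
    using Gi Gv Lb unfolding set_integrable_def set_lebesgue_integral_def G_def c_def by simp
qed

end

lemma term_bound:
  fixes \<epsilon> :: real and n :: nat
  assumes e: "0 < \<epsilon>" "\<epsilon> \<le> 1/16"
  shows "exp (- real n) * (real n + 1) * (exp (2 * real n * \<epsilon>) * (1 + 40 * \<epsilon>) - 1)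
         \<le> 640 * \<epsilon> * exp (-3/8) ^ n"
proof -
  define z where "z = 2 * real n * \<epsilon>"
  have z0: "0 \<le> z" unfolding z_def using e by simp
  have "1 - z \<le> exp (-z)" using exp_ge_add_one_self[of "-z"] by simp
  hence "exp z * (1 - z) \<le> exp z * exp (-z)" by (simp add: mult_left_mono)
  hence ez: "exp z - 1 \<le> z * exp z" by (simp add: exp_minus field_simps)
  have "exp z * (1 + 40 * \<epsilon>) - 1 = (exp z - 1) + 40 * \<epsilon> * exp z" by (simp add: algebra_simps)
  also have "\<dots> \<le> z * exp z + 40 * \<epsilon> * exp z" using ez by simp
  also have "\<dots> = \<epsilon> * exp z * (2 * real n + 40)" unfolding z_def by (simp add: algebra_simps)
  finally have s1: "exp z * (1 + 40 * \<epsilon>) - 1 \<le> \<epsilon> * exp z * (2 * real n + 40)" .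
  have "real n * (16 * \<epsilon>) \<le> real n * 1" by (rule mult_left_mono) (use e in auto)
  hence "z \<le> real n / 8" unfolding z_def by simp
  hence ez8: "exp z \<le> exp (real n / 8)" by simp
  have n4: "real n + 1 \<le> 4 * exp (real n / 4)"
    using exp_ge_add_one_self[of "real n / 4"] by linarith
  have n40: "2 * real n + 40 \<le> 160 * exp (real n / 4)"
    using exp_ge_add_one_self[of "real n / 4"] by linarith
  have "exp (- real n) * (real n + 1) * (exp z * (1 + 40 * \<epsilon>) - 1)
        \<le> exp (- real n) * (real n + 1) * (\<epsilon> * exp z * (2 * real n + 40))"
    by (rule mult_left_mono[OF s1]) simp
  also have "\<dots> = \<epsilon> * exp (- real n) * exp z * ((real n + 1) * (2 * real n + 40))"
    by (simp add: algebra_simps)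
  also have "\<dots> \<le> \<epsilon> * exp (- real n) * exp (real n / 8) * ((4 * exp (real n / 4)) * (160 * exp (real n / 4)))"
  proof (rule mult_mono)
    show "\<epsilon> * exp (- real n) * exp z \<le> \<epsilon> * exp (- real n) * exp (real n / 8)"
      using ez8 e by simp
    show "(real n + 1) * (2 * real n + 40) \<le> 4 * exp (real n / 4) * (160 * exp (real n / 4))"
      by (rule mult_mono[OF n4 n40]) auto
  qed (use e in auto)
  also have "\<dots> = 640 * \<epsilon> * (exp (- real n) * exp (real n / 8) * exp (real n / 4) * exp (real n / 4))"
    by (simp add: algebra_simps)
  also have "exp (- real n) * exp (real n / 8) * exp (real n / 4) * exp (real n / 4) = exp (real n * (-3/8))"
    by (simp add: exp_add[symmetric])
  also have "\<dots> = exp (-3/8) ^ n" by (rule exp_of_nat_mult)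
  finally show ?thesis unfolding z_def .
qed

lemma geom_bound: "(\<Sum>n. exp (-3/8::real) ^ n) \<le> 11/3"
proof -
  have "11/8 \<le> exp (3/8::real)" using exp_ge_add_one_self[of "3/8::real"] by simp
  hence r: "exp (-3/8::real) \<le> 8/11" by (simp add: exp_minus field_simps)
  have r1: "norm (exp (-3/8::real)) < 1" using r by simp
  have "(\<Sum>n. exp (-3/8::real) ^ n) = 1 / (1 - exp (-3/8))" by (rule suminf_geometric[OF r1])
  also have "\<dots> \<le> 1 / (1 - 8/11)" using r by (intro divide_left_mono) auto
  finally show ?thesis by simp
qed

context bmo_small begin

definition A :: "real \<Rightarrow> real \<Rightarrow> nat \<Rightarrow> complex" where
  "A x y n = interval_avg u (x - (real n + 1) * y) (x + (real n + 1) * y)"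

lemma A_step:
  assumes y: "0 < y"
  shows "cmod (A x y n - A x y (Suc n)) \<le> 2 * \<epsilon>"
proof -
  define p where "p = x - (real n + 1) * y"
  define q where "q = x + (real n + 1) * y"
  define p' where "p' = x - (real n + 2) * y"
  define q' where "q' = x + (real n + 2) * y"
  have pq: "p < q" "p' < q'" unfolding p_def q_def p'_def q'_def using y by (simp_all add: mult_pos_pos)
  have Aeq: "A x y n = interval_avg u p q" "A x y (Suc n) = interval_avg u p' q'"
    unfolding A_def p_def q_def p'_def q'_def by (simp_all add: algebra_simps)
  have "cmod (A x y n - A x y (Suc n)) \<le> (LINT t:{p..q}|lborel. f (A x y (Suc n)) t) / (q - p)"
    unfolding Aeq(1) by (rule avg_close[OF pq(1)])
  also have "(LINT t:{p..q}|lborel. f (A x y (Suc n)) t) \<le> (LINT t:{p'..q'}|lborel. f (A x y (Suc n)) t)"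
    by (rule set_int_mono_set) (use f_int[OF pq(2)] f_nonneg y in \<open>auto simp: p_def q_def p'_def q'_def\<close>)
  also have "\<dots> = mean_osc u p' q' * (q' - p')" unfolding mean_osc_eq Aeq(2) using pq by simp
  also have "\<dots> \<le> \<epsilon> * (q' - p')" using osc[OF pq(2)] pq by (simp add: mult_right_mono)
  finally have 1: "cmod (A x y n - A x y (Suc n)) \<le> \<epsilon> * (q' - p') / (q - p)" using pq by (simp add: divide_right_mono)
  have "real n * y \<ge> 0" using y by simp
  hence "q' - p' \<le> 2 * (q - p)" unfolding p_def q_def p'_def q'_def by (simp add: algebra_simps)
  hence "\<epsilon> * (q' - p') \<le> \<epsilon> * (2 * (q - p))" using eps_pos by (intro mult_left_mono) auto
  hence "\<epsilon> * (q' - p') / (q - p) \<le> 2 * \<epsilon>" using pq by (simp add: pos_divide_le_eq algebra_simps)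
  thus ?thesis using 1 by linarith
qed

lemma A_chain:
  assumes y: "0 < y"
  shows "cmod (A x y n - A x y 0) \<le> 2 * real n * \<epsilon>"
proof (induction n)
  case 0 thus ?case by simp
next
  case (Suc n)
  have "A x y (Suc n) - A x y 0 = (A x y (Suc n) - A x y n) + (A x y n - A x y 0)" by simp
  hence "cmod (A x y (Suc n) - A x y 0) \<le> cmod (A x y (Suc n) - A x y n) + cmod (A x y n - A x y 0)"
    by (metis norm_triangle_ineq)
  also have "cmod (A x y (Suc n) - A x y n) \<le> 2 * \<epsilon>" using A_step[OF y, of x n] by (simp add: norm_minus_commute)
  finally show ?case using Suc.IH by (simp add: algebra_simps)
qed

end

context bmo_small begin

lemma G_int:
  assumes y: "0 < y"
  shows "set_integrable lborel {x - (real n + 1) * y .. x + (real n + 1) * y} (\<lambda>t. exp (f (A x y 0) t) - 1) \<and>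
         (LINT t:{x - (real n + 1) * y .. x + (real n + 1) * y}|lborel. exp (f (A x y 0) t) - 1)
            \<le> 2 * (real n + 1) * y * (exp (2 * real n * \<epsilon>) * (1 + 40 * \<epsilon>) - 1)"
proof -
  define p where "p = x - (real n + 1) * y"
  define q where "q = x + (real n + 1) * y"
  have pq: "p < q" unfolding p_def q_def using y by (simp add: mult_pos_pos)
  have qp: "q - p = 2 * (real n + 1) * y" unfolding p_def q_def by (simp add: algebra_simps)
  have An: "A x y n = interval_avg u p q" unfolding A_def p_def q_def ..
  note jn = JN[OF pq, folded An]
  define e where "e = exp (2 * real n * \<epsilon>)"
  have pw: "exp (f (A x y 0) t) \<le> e * exp (f (A x y n) t)" for t
  proof -
    have "f (A x y 0) t \<le> f (A x y n) t + cmod (A x y n - A x y 0)" by (rule f_tri)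
    also have "\<dots> \<le> f (A x y n) t + 2 * real n * \<epsilon>" using A_chain[OF y, of x n] by simp
    finally have "exp (f (A x y 0) t) \<le> exp (f (A x y n) t + 2 * real n * \<epsilon>)" by simp
    thus ?thesis unfolding e_def by (simp add: exp_add mult.commute)
  qed
  have i2: "set_integrable lborel {p..q} (\<lambda>t. e * exp (f (A x y n) t))"
    using jn by simp
  have i3: "set_integrable lborel {p..q} (\<lambda>t. exp (f (A x y 0) t))"
  proof (rule set_integrable_bound[OF i2])
    show "set_borel_measurable lborel {p..q} (\<lambda>t. exp (f (A x y 0) t))"
      unfolding set_borel_measurable_def by measurable
    show "AE t in lborel. t \<in> {p..q} \<longrightarrow> norm (exp (f (A x y 0) t)) \<le> norm (e * exp (f (A x y n) t))"
      using pw by (auto simp: e_def)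
  qed
  have i1: "set_integrable lborel {p..q} (\<lambda>t. 1::real)"
    by (rule set_integrable_bdd[where B=1 and p=p and q=q]) auto
  have "(LINT t:{p..q}|lborel. exp (f (A x y 0) t) - 1) = (LINT t:{p..q}|lborel. exp (f (A x y 0) t)) - (q - p)"
    using pq by (subst set_integral_diff(2)[OF i3 i1]) (simp add: set_integral_const)
  also have "(LINT t:{p..q}|lborel. exp (f (A x y 0) t)) \<le> (LINT t:{p..q}|lborel. e * exp (f (A x y n) t))"
    by (rule set_integral_mono[OF i3 i2 pw])
  also have "\<dots> = e * (LINT t:{p..q}|lborel. exp (f (A x y n) t))" by simp
  also have "\<dots> \<le> e * ((1 + 40*\<epsilon>) * (q - p))" using jn by (intro mult_left_mono) (auto simp: e_def)
  finally have "(LINT t:{p..q}|lborel. exp (f (A x y 0) t) - 1) \<le> (q - p) * (e * (1 + 40 * \<epsilon>) - 1)"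
    by (simp add: algebra_simps)
  moreover have "set_integrable lborel {p..q} (\<lambda>t. exp (f (A x y 0) t) - 1)"
    by (rule set_integral_diff(1)[OF i3 i1])
  ultimately show ?thesis unfolding p_def q_def e_def by (simp add: qp[unfolded p_def q_def])
qed

lemma weighted:
  assumes y: "0 < y" and C: "0 \<le> C" and Wm: "W \<in> borel_measurable lborel"
    and W0: "\<And>t. 0 \<le> W t" and Wb: "\<And>t. W t \<le> C / y * exp (- \<bar>x - t\<bar> / y)"
  shows "integrable lborel (\<lambda>t. W t * (exp (f (A x y 0) t) - 1)) \<and>
         (LINT t|lborel. W t * (exp (f (A x y 0) t) - 1)) \<le> 1280 * C * \<epsilon> * (11/3)"
proof -
  define G where "G t = exp (f (A x y 0) t) - 1" for t
  have G0: "0 \<le> G t" for t unfolding G_def using f_nonneg by simp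
  have Gm[measurable]: "G \<in> borel_measurable lborel" unfolding G_def by measurable
  define Iv where "Iv n = {x - (real n + 1) * y .. x + (real n + 1) * y}" for n :: nat
  define tm where "tm n t = C / y * exp (- real n) * (indicator (Iv n) t * G t)" for n t
  have tm0: "0 \<le> tm n t" for n t unfolding tm_def using C y G0 by (simp add: indicator_def)
  have tmm[measurable]: "tm n \<in> borel_measurable lborel" for n unfolding tm_def Iv_def by measurable
  have pw: "ennreal (W t * G t) \<le> (\<Sum>n. ennreal (tm n t))" for t
  proof -
    define n0 where "n0 = nat \<lfloor>\<bar>x - t\<bar> / y\<rfloor>"
    have q0: "0 \<le> \<bar>x - t\<bar> / y" using y by simp
    have "real n0 = of_int \<lfloor>\<bar>x - t\<bar> / y\<rfloor>" unfolding n0_def using q0 by simp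
    hence fl: "real n0 \<le> \<bar>x - t\<bar> / y" "\<bar>x - t\<bar> / y < real n0 + 1" by linarith+
    have "\<bar>x - t\<bar> < (real n0 + 1) * y" using fl(2) y by (simp add: divide_less_eq)
    hence tin: "t \<in> Iv n0" unfolding Iv_def by auto
    have "W t \<le> C / y * exp (- \<bar>x - t\<bar> / y)" by (rule Wb)
    also have "\<dots> \<le> C / y * exp (- real n0)" using fl(1) C y by (intro mult_left_mono) auto
    finally have Wt: "W t \<le> C / y * exp (- real n0)" .
    have "W t * G t \<le> C / y * exp (- real n0) * G t" by (rule mult_right_mono[OF Wt G0])
    hence "W t * G t \<le> tm n0 t" unfolding tm_def using tin by simp
    hence "ennreal (W t * G t) \<le> ennreal (tm n0 t)" by (rule ennreal_leI)
    also have "\<dots> = (\<Sum>n\<in>{n0}. ennreal (tm n t))" by simp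
    also have "\<dots> \<le> (\<Sum>n. ennreal (tm n t))" by (rule sum_le_suminf) auto
    finally show ?thesis .
  qed
  have Gi: "set_integrable lborel (Iv n) G" and GI: "(LINT t:Iv n|lborel. G t) \<le> 2 * (real n + 1) * y * (exp (2 * real n * \<epsilon>) * (1 + 40 * \<epsilon>) - 1)" for n
    using G_int[OF y, of x n] unfolding G_def Iv_def by auto
  have tmi: "integrable lborel (tm n)" for n
    using Gi[of n] unfolding tm_def set_integrable_def by simp
  have tmI: "integral\<^sup>L lborel (tm n) = C / y * exp (- real n) * (LINT t:Iv n|lborel. G t)" for n
    unfolding tm_def set_lebesgue_integral_def by simp
  define r where "r = exp (-3/8::real)"
  have tmb: "(\<integral>\<^sup>+ t. ennreal (tm n t) \<partial>lborel) \<le> ennreal (1280 * C * \<epsilon> * r ^ n)" for n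
  proof -
    have eq: "(\<integral>\<^sup>+ t. ennreal (tm n t) \<partial>lborel) = ennreal (integral\<^sup>L lborel (tm n))"
      by (rule nn_integral_eq_integral[OF tmi]) (simp add: tm0)
    have "integral\<^sup>L lborel (tm n) \<le> C / y * exp (- real n) * (2 * (real n + 1) * y * (exp (2 * real n * \<epsilon>) * (1 + 40 * \<epsilon>) - 1))"
      unfolding tmI using GI[of n] C y by (intro mult_left_mono) auto
    also have "\<dots> = 2 * C * (exp (- real n) * (real n + 1) * (exp (2 * real n * \<epsilon>) * (1 + 40 * \<epsilon>) - 1))"
      using y by (simp add: field_simps)
    also have "\<dots> \<le> 2 * C * (640 * \<epsilon> * r ^ n)"
      unfolding r_def using C by (intro mult_left_mono term_bound eps_pos eps_small) auto
    finally have "integral\<^sup>L lborel (tm n) \<le> 1280 * C * \<epsilon> * r ^ n" by (simp add: algebra_simps)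
    thus ?thesis unfolding eq by (rule ennreal_leI)
  qed
  have r0: "0 \<le> r" "norm r < 1"
  proof -
    show "0 \<le> r" unfolding r_def by simp
    show "norm r < 1" unfolding r_def by simp
  qed
  have summ: "summable (\<lambda>n. 1280 * C * \<epsilon> * r ^ n)"
    by (intro summable_mult summable_geometric r0)
  have "(\<integral>\<^sup>+ t. ennreal (W t * G t) \<partial>lborel) \<le> (\<integral>\<^sup>+ t. (\<Sum>n. ennreal (tm n t)) \<partial>lborel)"
    by (rule nn_integral_mono) (rule pw)
  also have "\<dots> = (\<Sum>n. (\<integral>\<^sup>+ t. ennreal (tm n t) \<partial>lborel))"
    by (rule nn_integral_suminf) simp
  also have "\<dots> \<le> (\<Sum>n. ennreal (1280 * C * \<epsilon> * r ^ n))"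
    by (rule suminf_le) (use tmb in auto)
  also have "\<dots> = ennreal (\<Sum>n. 1280 * C * \<epsilon> * r ^ n)"
    by (rule suminf_ennreal2[OF _ summ]) (use C eps_pos r0 in auto)
  also have "(\<Sum>n. 1280 * C * \<epsilon> * r ^ n) = 1280 * C * \<epsilon> * (\<Sum>n. r ^ n)"
    by (rule suminf_mult) (rule summable_geometric[OF r0(2)])
  also have "\<dots> \<le> 1280 * C * \<epsilon> * (11/3)"
    using geom_bound C eps_pos unfolding r_def by (intro mult_left_mono) auto
  finally have nnb: "(\<integral>\<^sup>+ t. ennreal (W t * G t) \<partial>lborel) \<le> ennreal (1280 * C * \<epsilon> * (11/3))"
    by (simp add: ennreal_leI)
  have WGi: "integrable lborel (\<lambda>t. W t * G t)"
  proof (rule integrableI_nonneg)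
    show "(\<lambda>t. W t * G t) \<in> borel_measurable lborel" using Wm by measurable
    show "AE t in lborel. 0 \<le> W t * G t" using W0 G0 by simp
    show "(\<integral>\<^sup>+ t. ennreal (W t * G t) \<partial>lborel) < \<infinity>" using nnb by (simp add: le_less_trans)
  qed
  have "ennreal (LINT t|lborel. W t * G t) = (\<integral>\<^sup>+ t. ennreal (W t * G t) \<partial>lborel)"
    by (rule nn_integral_eq_integral[symmetric, OF WGi]) (simp add: W0 G0)
  hence "ennreal (LINT t|lborel. W t * G t) \<le> ennreal (1280 * C * \<epsilon> * (11/3))" using nnb by simp
  hence "(LINT t|lborel. W t * G t) \<le> 1280 * C * \<epsilon> * (11/3)"
    using C eps_pos by (subst (asm) ennreal_le_iff) auto
  thus ?thesis using WGi unfolding G_def by simp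
qed

end

lemma norm_exp_sub1: fixes z :: complex shows "cmod (exp z - 1) \<le> exp (cmod z) - 1"
proof -
  define g where "g n = z^(Suc n) /\<^sub>R fact (Suc n)" for n
  have "(\<lambda>n. z^n /\<^sub>R fact n) sums exp z" by (rule exp_converges)
  hence sg: "g sums (exp z - 1)" unfolding g_def by (subst sums_Suc_iff) simp
  have "(\<lambda>n. cmod z^n /\<^sub>R fact n) sums exp (cmod z)" by (rule exp_converges)
  hence "(\<lambda>n. cmod z^(Suc n) /\<^sub>R fact (Suc n)) sums (exp (cmod z) - 1)" by (subst sums_Suc_iff) simp
  moreover have "norm (g n) = cmod z^(Suc n) /\<^sub>R fact (Suc n)" for n
    unfolding g_def by (simp add: norm_power norm_mult)
  ultimately have sn: "(\<lambda>n. norm (g n)) sums (exp (cmod z) - 1)" by simp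
  have "cmod (exp z - 1) = norm (suminf g)" using sums_unique[OF sg] by simp
  also have "\<dots> \<le> (\<Sum>n. norm (g n))" by (rule summable_norm) (use sn in \<open>simp add: sums_iff\<close>)
  also have "\<dots> = exp (cmod z) - 1" using sums_unique[OF sn] by simp
  finally show ?thesis .
qed

lemma affine_int:
  fixes g :: "real \<Rightarrow> 'b::{banach, second_countable_topology}"
  assumes g: "integrable lborel g" and y: "0 < y"
  shows "integrable lborel (\<lambda>t. g ((x - t) / y))"
    and "(LINT t|lborel. g ((x - t) / y)) = y *\<^sub>R (LINT t|lborel. g t)"
proof -
  have eq: "(\<lambda>t. g (x / y + (- 1 / y) * t)) = (\<lambda>t. g ((x - t) / y))"
    by (rule ext) (simp add: diff_divide_distrib)
  have c: "- 1 / y \<noteq> 0" using y by simp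
  show "integrable lborel (\<lambda>t. g ((x - t) / y))"
    using lborel_integrable_real_affine[OF g c, of "x / y"] unfolding eq .
  have "(LINT t|lborel. g t) = \<bar>- 1 / y\<bar> *\<^sub>R (LINT t|lborel. g (x / y + (- 1 / y) * t))"
    by (rule lborel_integral_real_affine[OF c])
  also have "\<dots> = (1 / y) *\<^sub>R (LINT t|lborel. g ((x - t) / y))" unfolding eq using y by simp
  finally show "(LINT t|lborel. g ((x - t) / y)) = y *\<^sub>R (LINT t|lborel. g t)" using y by simp
qed

theorem lemma3p4:
  fixes \<phi> :: "real \<Rightarrow> complex" and C :: real
  assumes "C > 0"
    and "\<And>x. cmod (\<phi> x) \<le> C * exp (- \<bar>x\<bar>)"
    and "integrable lborel \<phi>"
    and "(LINT x|lborel. \<phi> x) = 1"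
  shows "\<exists>\<epsilon>>0. \<exists>K\<ge>1. \<forall>u. in_BMO u \<and> bmo_norm u < \<epsilon> \<longrightarrow>
           (\<forall>x. \<forall>y>0.
              cmod (conv (dil \<phi> y) (\<lambda>t. exp (u t)) x) / K \<le> cmod (exp (conv (dil \<phi> y) u x)) \<and>
              cmod (exp (conv (dil \<phi> y) u x)) \<le> K * cmod (conv (dil \<phi> y) (\<lambda>t. exp (u t)) x))"
proof -
  note Cpos = assms(1) and phib = assms(2) and phii = assms(3) and phi1 = assms(4)
  have phi_meas[measurable]: "\<phi> \<in> borel_measurable lborel" using phii by (rule borel_measurable_integrable)
  define \<Phi>1 where "\<Phi>1 = (LINT x|lborel. cmod (\<phi> x))"
  have \<Phi>0: "0 \<le> \<Phi>1" unfolding \<Phi>1_def by (rule integral_nonneg_AE) simp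
  define D where "D = 1280 * (11/3::real)"
  define \<epsilon> where "\<epsilon> = min (1/16) (1 / (4 * (1 + \<Phi>1) * D * C))"
  have Dpos: "0 < D" unfolding D_def by simp
  have ep: "0 < \<epsilon>" "\<epsilon> \<le> 1/16" unfolding \<epsilon>_def using \<Phi>0 Dpos Cpos by auto
  have key: "D * C * \<epsilon> \<le> 1 / (4 * (1 + \<Phi>1))"
  proof -
    have "\<epsilon> \<le> 1 / (4 * (1 + \<Phi>1) * D * C)" unfolding \<epsilon>_def by simp
    hence "D * C * \<epsilon> \<le> D * C * (1 / (4 * (1 + \<Phi>1) * D * C))"
      using Dpos Cpos by (intro mult_left_mono) auto
    also have "\<dots> = 1 / (4 * (1 + \<Phi>1))"
    proof -
      define P where "P = 4 * (1 + \<Phi>1) * D * C"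
      have Pp: "P \<noteq> 0" "4 * (1 + \<Phi>1) \<noteq> 0" unfolding P_def using Dpos Cpos \<Phi>0 by auto
      have "D * C * (1 / P) = (D * C) / P" by simp
      also have "\<dots> = 1 / (4 * (1 + \<Phi>1))"
        by (subst frac_eq_eq[OF Pp]) (simp add: P_def algebra_simps)
      finally show ?thesis unfolding P_def .
    qed
    finally show ?thesis .
  qed
  have main: "cmod (conv (dil \<phi> y) (\<lambda>t. exp (u t)) x) / 2 \<le> cmod (exp (conv (dil \<phi> y) u x)) \<and>
              cmod (exp (conv (dil \<phi> y) u x)) \<le> 2 * cmod (conv (dil \<phi> y) (\<lambda>t. exp (u t)) x)"
    if bmo: "in_BMO u" and small: "bmo_norm u < \<epsilon>" and y: "0 < y" for u x y
  proof -
    have loc: "\<And>p q. p < q \<Longrightarrow> set_integrable lborel {p..q} u" using bmo unfolding in_BMO_def by blast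
    have osc: "mean_osc u p q \<le> \<epsilon>" if pq: "p < q" for p q
    proof -
      have "mean_osc u p q \<le> bmo_norm u"
        unfolding bmo_norm_def by (rule cSup_upper) (use bmo pq in \<open>auto simp: in_BMO_def\<close>)
      thus ?thesis using small by simp
    qed
    interpret B: bmo_small u \<epsilon> by unfold_locales (use loc osc ep in auto)
    define k where "k t = dil \<phi> y (x - t)" for t
    define W where "W t = cmod (k t)" for t
    define a where "a = B.A x y 0"
    define G where "G t = exp (B.f a t) - 1" for t
    define S0 where "S0 = D * C * \<epsilon>"
    have k_meas[measurable]: "k \<in> borel_measurable lborel" unfolding k_def dil_def by measurable
    have W_meas[measurable]: "W \<in> borel_measurable lborel" unfolding W_def by measurable
    have G_meas[measurable]: "G \<in> borel_measurable lborel" unfolding G_def by measurable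
    have W0: "0 \<le> W t" for t unfolding W_def by simp
    have G0: "0 \<le> G t" for t unfolding G_def using B.f_nonneg by simp
    have fG: "B.f a t \<le> G t" for t unfolding G_def using exp_ge_add_one_self[of "B.f a t"] by linarith
    have Wb: "W t \<le> C / y * exp (- \<bar>x - t\<bar> / y)" for t
    proof -
      have "W t = (1 / y) * cmod (\<phi> ((x - t) / y))"
        unfolding W_def k_def dil_def using y by (simp add: norm_mult norm_divide)
      also have "\<dots> \<le> (1 / y) * (C * exp (- \<bar>(x - t) / y\<bar>))"
        using phib[of "(x - t) / y"] y by (intro mult_left_mono) auto
      also have "\<bar>(x - t) / y\<bar> = \<bar>x - t\<bar> / y" using y by simp
      finally show ?thesis by simp
    qed
    have wt: "integrable lborel (\<lambda>t. W t * G t)" "(LINT t|lborel. W t * G t) \<le> S0"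
      using B.weighted[OF y less_imp_le[OF Cpos] W_meas W0 Wb]
      unfolding G_def a_def S0_def D_def by (auto simp: algebra_simps)
    have kfun: "k = (\<lambda>t. complex_of_real (1 / y) * \<phi> ((x - t) / y))"
      unfolding k_def dil_def by simp
    have ki: "integrable lborel k" unfolding kfun
      by (intro integrable_mult_right affine_int(1)[OF phii y])
    have k1: "(LINT t|lborel. k t) = 1"
      unfolding kfun using affine_int(2)[OF phii y, of x] phi1 y
      by (simp add: scaleR_conv_of_real)
    have Wfun: "W = (\<lambda>t. (1 / y) * cmod (\<phi> ((x - t) / y)))"
      unfolding W_def kfun using y by (auto simp: norm_mult norm_divide)
    have phin: "integrable lborel (\<lambda>t. cmod (\<phi> t))" using phii by simp
    have Wi: "integrable lborel W" unfolding Wfun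
      by (intro integrable_mult_right affine_int(1)[OF phin y])
    have W1: "(LINT t|lborel. W t) = \<Phi>1"
      unfolding Wfun \<Phi>1_def using affine_int(2)[OF phin y, of x] y by simp
    have u_meas[measurable]: "u \<in> borel_measurable lborel" by (rule B.u_meas)
    have ub: "cmod (u t) \<le> G t + cmod a" for t
    proof -
      have "cmod (u t) \<le> cmod (u t - a) + cmod a" using norm_triangle_ineq[of "u t - a" a] by simp
      thus ?thesis using fG[of t] unfolding B.f_def by linarith
    qed
    have kui: "integrable lborel (\<lambda>t. k t * u t)"
    proof (rule Bochner_Integration.integrable_bound)
      show "integrable lborel (\<lambda>t. W t * G t + cmod a * W t)"
        by (intro Bochner_Integration.integrable_add wt(1) integrable_mult_right Wi)
      show "(\<lambda>t. k t * u t) \<in> borel_measurable lborel" by measurable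
      show "AE t in lborel. norm (k t * u t) \<le> norm (W t * G t + cmod a * W t)"
      proof (rule AE_I2)
        fix t
        have "W t * cmod (u t) \<le> W t * (G t + cmod a)" by (rule mult_left_mono[OF ub W0])
        moreover have "0 \<le> W t * G t + cmod a * W t" using W0 G0 by simp
        ultimately show "norm (k t * u t) \<le> norm (W t * G t + cmod a * W t)"
          by (simp add: W_def norm_mult algebra_simps)
      qed
    qed
    have kei: "integrable lborel (\<lambda>t. k t * exp (u t))"
    proof (rule Bochner_Integration.integrable_bound)
      show "integrable lborel (\<lambda>t. exp (cmod a) * (W t * G t + W t))"
        by (intro integrable_mult_right Bochner_Integration.integrable_add wt(1) Wi)
      show "(\<lambda>t. k t * exp (u t)) \<in> borel_measurable lborel" by measurable
      show "AE t in lborel. norm (k t * exp (u t)) \<le> norm (exp (cmod a) * (W t * G t + W t))"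
      proof (rule AE_I2)
        fix t
        have "cmod (exp (u t)) \<le> exp (cmod (u t))" by (rule norm_exp)
        also have "\<dots> \<le> exp (B.f a t + cmod a)"
          using norm_triangle_ineq[of "u t - a" a] unfolding B.f_def by simp
        also have "\<dots> = exp (cmod a) * (G t + 1)" unfolding G_def by (simp add: exp_add)
        finally have "W t * cmod (exp (u t)) \<le> W t * (exp (cmod a) * (G t + 1))" by (rule mult_left_mono[OF _ W0])
        moreover have "0 \<le> exp (cmod a) * (W t * G t + W t)" using W0 G0 by simp
        ultimately show "norm (k t * exp (u t)) \<le> norm (exp (cmod a) * (W t * G t + W t))"
          by (simp add: W_def norm_mult algebra_simps)
      qed
    qed
    define c where "c = conv (dil \<phi> y) u x"
    define E where "E = conv (dil \<phi> y) (\<lambda>t. exp (u t)) x"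
    have c_eq: "c = (LINT t|lborel. k t * u t)" unfolding c_def conv_def k_def ..
    have E_eq: "E = (LINT t|lborel. k t * exp (u t))" unfolding E_def conv_def k_def ..
    have ka: "integrable lborel (\<lambda>t. k t * a)" using ki by simp
    have ka1: "(LINT t|lborel. k t * a) = a" using k1 by simp
    have ac_eq: "a - c = (LINT t|lborel. k t * (a - u t))"
    proof -
      have "(LINT t|lborel. k t * (a - u t)) = (LINT t|lborel. k t * a - k t * u t)"
        by (simp add: right_diff_distrib)
      also have "\<dots> = (LINT t|lborel. k t * a) - (LINT t|lborel. k t * u t)"
        by (rule Bochner_Integration.integral_diff[OF ka kui])
      finally show ?thesis using ka1 c_eq by simp
    qed
    have Wf_int: "integrable lborel (\<lambda>t. W t * B.f a t)"
    proof (rule Bochner_Integration.integrable_bound[OF wt(1)])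
      show "(\<lambda>t. W t * B.f a t) \<in> borel_measurable lborel" by measurable
      show "AE t in lborel. norm (W t * B.f a t) \<le> norm (W t * G t)"
        using W0 G0 B.f_nonneg fG by (intro AE_I2) (simp add: mult_left_mono)
    qed
    have ac: "cmod (a - c) \<le> S0"
    proof -
      have "cmod (a - c) \<le> (LINT t|lborel. norm (k t * (a - u t)))"
        unfolding ac_eq by (rule Bochner_Integration.integral_norm_bound)
      also have "\<dots> = (LINT t|lborel. W t * B.f a t)"
        by (rule Bochner_Integration.integral_cong) (simp_all add: W_def B.f_def norm_mult norm_minus_commute)
      also have "\<dots> \<le> (LINT t|lborel. W t * G t)"
        by (rule Bochner_Integration.integral_mono[OF Wf_int wt(1)]) (simp add: mult_left_mono W0 fG)
      also have "\<dots> \<le> S0" by (rule wt(2))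
      finally show ?thesis .
    qed
    have S0_0: "0 \<le> S0" unfolding S0_def using Dpos Cpos ep by simp
    have S0_k: "S0 \<le> 1 / (4 * (1 + \<Phi>1))" unfolding S0_def by (rule key)
    have "1 / (4 * (1 + \<Phi>1)) \<le> 1 / 4" using \<Phi>0 by (simp add: field_simps)
    hence S0_4: "S0 \<le> 1/4" using S0_k by linarith
    have eS: "exp S0 \<le> 1 + 2 * S0" by (rule real_exp_bound_lemma) (use S0_0 S0_4 in auto)
    have hb: "cmod (k t * (exp (u t) - exp c)) \<le> cmod (exp c) * (exp S0 * (W t * G t) + (exp S0 - 1) * W t)" for t
    proof -
      have e1: "exp (u t) - exp c = exp c * (exp (u t - c) - 1)" by (simp add: exp_diff field_simps)
      have "cmod (u t - c) \<le> B.f a t + cmod (a - c)"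
        unfolding B.f_def using norm_triangle_ineq[of "u t - a" "a - c"] by simp
      also have "\<dots> \<le> B.f a t + S0" using ac by simp
      finally have "exp (cmod (u t - c)) - 1 \<le> exp (B.f a t + S0) - 1" by simp
      also have "exp (B.f a t + S0) - 1 = exp S0 * G t + (exp S0 - 1)" unfolding G_def by (simp add: exp_add algebra_simps)
      finally have 2: "cmod (exp (u t - c) - 1) \<le> exp S0 * G t + (exp S0 - 1)"
        using norm_exp_sub1[of "u t - c"] by linarith
      have "cmod (k t * (exp (u t) - exp c)) = W t * (cmod (exp c) * cmod (exp (u t - c) - 1))"
        unfolding e1 W_def by (simp add: norm_mult)
      also have "\<dots> \<le> W t * (cmod (exp c) * (exp S0 * G t + (exp S0 - 1)))"
        by (intro mult_left_mono 2 W0) simp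
      also have "\<dots> = cmod (exp c) * (exp S0 * (W t * G t) + (exp S0 - 1) * W t)" by (simp add: algebra_simps)
      finally show ?thesis .
    qed
    have kec: "integrable lborel (\<lambda>t. k t * exp c)" using ki by simp
    have kec1: "(LINT t|lborel. k t * exp c) = exp c" using k1 by simp
    have hfun: "(\<lambda>t. k t * (exp (u t) - exp c)) = (\<lambda>t. k t * exp (u t) - k t * exp c)"
      by (simp add: fun_eq_iff right_diff_distrib)
    have hi: "integrable lborel (\<lambda>t. k t * (exp (u t) - exp c))"
      unfolding hfun by (rule Bochner_Integration.integrable_diff[OF kei kec])
    have hval: "(LINT t|lborel. k t * (exp (u t) - exp c)) = E - exp c"
      unfolding hfun Bochner_Integration.integral_diff[OF kei kec] kec1 E_eq ..
    have bi: "integrable lborel (\<lambda>t. cmod (exp c) * (exp S0 * (W t * G t) + (exp S0 - 1) * W t))"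
      by (intro integrable_mult_right Bochner_Integration.integrable_add wt(1) Wi)
    have bval: "(LINT t|lborel. cmod (exp c) * (exp S0 * (W t * G t) + (exp S0 - 1) * W t))
        = cmod (exp c) * (exp S0 * (LINT t|lborel. W t * G t) + (exp S0 - 1) * \<Phi>1)"
    proof -
      have i1: "integrable lborel (\<lambda>t. exp S0 * (W t * G t))" by (intro integrable_mult_right wt(1))
      have i2: "integrable lborel (\<lambda>t. (exp S0 - 1) * W t)" by (intro integrable_mult_right Wi)
      show ?thesis by (simp add: Bochner_Integration.integral_add[OF i1 i2] W1)
    qed
    have EmC: "cmod (E - exp c) \<le> cmod (exp c) / 2"
    proof -
      have "cmod (E - exp c) \<le> (LINT t|lborel. cmod (k t * (exp (u t) - exp c)))"
        unfolding hval[symmetric] by (rule Bochner_Integration.integral_norm_bound)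
      also have "\<dots> \<le> (LINT t|lborel. cmod (exp c) * (exp S0 * (W t * G t) + (exp S0 - 1) * W t))"
        by (rule Bochner_Integration.integral_mono[OF integrable_norm[OF hi] bi hb])
      also have "\<dots> = cmod (exp c) * (exp S0 * (LINT t|lborel. W t * G t) + (exp S0 - 1) * \<Phi>1)" by (rule bval)
      also have "\<dots> \<le> cmod (exp c) * (1/2)"
      proof (rule mult_left_mono)
        have f1: "exp S0 * (LINT t|lborel. W t * G t) \<le> exp S0 * S0" using wt(2) by simp
        have f2: "exp S0 * S0 \<le> (1 + 2 * S0) * S0" by (rule mult_right_mono[OF eS S0_0])
        have f3: "(exp S0 - 1) * \<Phi>1 \<le> (2 * S0) * \<Phi>1" using eS \<Phi>0 by (intro mult_right_mono) auto
        have f4: "S0 * S0 \<le> (1/4) * S0" by (rule mult_right_mono[OF S0_4 S0_0])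
        have "S0 * (4 * (1 + \<Phi>1)) \<le> 1" using S0_k \<Phi>0 by (simp add: pos_le_divide_eq)
        hence f5: "4 * S0 + 4 * (S0 * \<Phi>1) \<le> 1" by (simp add: algebra_simps)
        have f6: "(1 + 2 * S0) * S0 = S0 + 2 * (S0 * S0)" by (simp add: algebra_simps)
        have f7: "(2 * S0) * \<Phi>1 = 2 * (S0 * \<Phi>1)" by simp
        show "exp S0 * (LINT t|lborel. W t * G t) + (exp S0 - 1) * \<Phi>1 \<le> 1/2"
          using f1 f2 f3 f4 f5 f6 f7 S0_0 by linarith
      qed simp
      finally show ?thesis by simp
    qed
    have t1: "cmod E - cmod (exp c) \<le> cmod (E - exp c)" by (rule norm_triangle_ineq2)
    have t2: "cmod (exp c) - cmod E \<le> cmod (E - exp c)"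
      using norm_triangle_ineq2[of "exp c" E] by (simp add: norm_minus_commute)
    show ?thesis unfolding E_def[symmetric] c_def[symmetric] using t1 t2 EmC by linarith
  qed
  show ?thesis
    apply (rule exI[of _ \<epsilon>], rule conjI, rule ep(1))
    apply (rule exI[of _ 2], rule conjI, simp)
    using main by blast
qed

end
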